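(* Suppose the probability measure $pr$ satisfies: for every $B\in\Delta$ and all distinct objects $a,b\in U\setminus\mathrm{inds}_B$, $$pr(F\bar G_b\mid FG_a\wedge B)\le pr(F\bar G_b\mid B).$$ Then for every object $a\in U$ and every $D\in\delta$ that determines neither $FG_a$ nor $H$, Nicod's condition holds: $$pr(H\mid FG_a\wedge D)>pr(H\mid D).$$
   Context: Fix an integer $N\ge 1$, the universe $U=\{1,\dots,N\}$ of distinct objects, and two monadic predicates $F,G$. For an object $b$ write $F_b$ ("$b$ is $F$"), $G_b$, and $F{\to}G_b:=F_b\to G_b$, $F\bar G_b:=F_b\wedge\neg G_b$, $FG_b:=F_b\wedge G_b$, $\bar FG_b:=\neg F_b\wedge G_b$, $\bar F\bar G_b:=\neg F_b\wedge\neg G_b$. For a 1-place predicate $\psi$ and objects $b_1,\dots,b_n$ write $\psi_{b_1:b_n}:=\psi_{b_1}\wedge\dots\wedge\psi_{b_n}$ (the tautology $\top$ if the list is empty). The hypothesis is $H:=\bigwedge_{b\in U}(F_b\to G_b)$. The sample space $\Omega$ is the set of complete description vectors, i.e. all truth assignments to the atoms $F_b,G_b$ ($b\in U$); a proposition $\rho$ is identified with the event $\{o\in\Omega:o\models\rho\}$, $pr$ is a probability measure on the power set of $\Omega$, and $pr(\rho)$ denotes the probability of that event. Standing assumption (Cournot's principle): $0<pr(\rho)<1$ for every proposition $\rho$ that is neither valid nor unsatisfiable. A proposition $D$ determines $\rho$ if $D\models\rho$ or $D\models\neg\rho$. $\Delta$ is the set of consistent propositions logically equivalent to a conjunction $\bigwedge_{x=1}^{k}\psi^x_{b_x}$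 ($k\ge 0$) with $b_1,\dots,b_k\in U$ pairwise distinct and each $\psi^x$ one of the predicates $F,\neg F,G,\neg G,\bar F\bar G,\neg\bar F\bar G,\bar FG,\neg\bar FG,F\bar G,F{\to}G,FG,\neg FG$; for such $\rho$, $\mathrm{inds}_\rho:=\{b_1,\dots,b_k\}$ (so $\top\in\Delta$ with $\mathrm{inds}_\top=\emptyset$). $\delta\subseteq\Delta$ is the set of such conjunctions in which every $\psi^x\in\{\bar F\bar G,\bar FG,FG\}$ (complete descriptions of some objects, none of them a counterexample to $H$). *)

theory Defs
  imports "HOL-Probability.Probability"
begin

text \<open>A complete description vector assigns to every object b in U = {1..N} the pair
  (truth value of F_b, truth value of G_b). Outside U the assignment is fixed to (False,False),
  so that Omega N is in bijection with the truth assignments to the atoms F_b, G_b (b in U).\<close>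

type_synonym cdv = "nat \<Rightarrow> bool \<times> bool"

definition U :: "nat \<Rightarrow> nat set" where
  "U N = {1..N}"

definition Omega :: "nat \<Rightarrow> cdv set" where
  "Omega N = {w. \<forall>b. b \<notin> U N \<longrightarrow> w b = (False, False)}"

definition pF :: "(bool \<times> bool) set" where "pF = {p. fst p}"
definition pnotF :: "(bool \<times> bool) set" where "pnotF = {p. \<not> fst p}"
definition pG :: "(bool \<times> bool) set" where "pG = {p. snd p}"
definition pnotG :: "(bool \<times> bool) set" where "pnotG = {p. \<not> snd p}"
definition pnFnG :: "(bool \<times> bool) set" where "pnFnG = {p. \<not> fst p \<and> \<not> snd p}"
definition pnot_nFnG :: "(bool \<times> bool) set" where "pnot_nFnG = - pnFnG"
definition pnFG :: "(bool \<times> bool) set" where "pnFG = {p. \<not> fst p \<and> snd p}"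
definition pnot_nFG :: "(bool \<times> bool) set" where "pnot_nFG = - pnFG"
definition pFnG :: "(bool \<times> bool) set" where "pFnG = {p. fst p \<and> \<not> snd p}"
definition pFimpG :: "(bool \<times> bool) set" where "pFimpG = {p. fst p \<longrightarrow> snd p}"
definition pFG :: "(bool \<times> bool) set" where "pFG = {p. fst p \<and> snd p}"
definition pnot_FG :: "(bool \<times> bool) set" where "pnot_FG = - pFG"

definition Delta_preds :: "(bool \<times> bool) set set" where
  "Delta_preds = {pF, pnotF, pG, pnotG, pnFnG, pnot_nFnG, pnFG, pnot_nFG, pFnG, pFimpG, pFG, pnot_FG}"

definition delta_preds :: "(bool \<times> bool) set set" where
  "delta_preds = {pnFnG, pnFG, pFG}"

definition atom :: "nat \<Rightarrow> nat \<Rightarrow> (bool \<times> bool) set \<Rightarrow> cdv set" where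
  "atom N b P = {w \<in> Omega N. w b \<in> P}"

text \<open>Event of a conjunction psi^1_{b_1} /\ ... /\ psi^k_{b_k} with pairwise distinct objects,
  represented by a finite partial map c from objects to predicates (dom c = inds).\<close>
definition conj_event :: "nat \<Rightarrow> (nat \<rightharpoonup> (bool \<times> bool) set) \<Rightarrow> cdv set" where
  "conj_event N c = {w \<in> Omega N. \<forall>b \<in> dom c. w b \<in> the (c b)}"

definition Delta_rep :: "nat \<Rightarrow> (nat \<rightharpoonup> (bool \<times> bool) set) set" where
  "Delta_rep N = {c. dom c \<subseteq> U N \<and> ran c \<subseteq> Delta_preds \<and> conj_event N c \<noteq> {}}"

definition delta_rep :: "nat \<Rightarrow> (nat \<rightharpoonup> (bool \<times> bool) set) set" where
  "delta_rep N = {c. dom c \<subseteq> U N \<and> ran c \<subseteq> delta_preds \<and> conj_event N c \<noteq> {}}"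

definition Hyp :: "nat \<Rightarrow> cdv set" where
  "Hyp N = {w \<in> Omega N. \<forall>b \<in> U N. fst (w b) \<longrightarrow> snd (w b)}"

definition determines :: "nat \<Rightarrow> cdv set \<Rightarrow> cdv set \<Rightarrow> bool" where
  "determines N D \<rho> \<longleftrightarrow> D \<subseteq> \<rho> \<or> D \<subseteq> Omega N - \<rho>"

definition cond_pr :: "cdv measure \<Rightarrow> cdv set \<Rightarrow> cdv set \<Rightarrow> real" where
  "cond_pr M A B = measure M (A \<inter> B) / measure M B"

end

theory Submission
  imports Defs
begin

theorem theorem1:
  fixes N :: nat and M :: "cdv measure"
  assumes N_pos: "N \<ge> 1"
    and prob: "prob_space M"
    and space: "space M = Omega N"
    and sets: "sets M = Pow (Omega N)"
    and cournot: "\<forall>E. E \<subseteq> Omega N \<and> E \<noteq> {} \<and> E \<noteq> Omega N \<longrightarrow>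
                     0 < measure M E \<and> measure M E < 1"
    and hyp: "\<forall>c \<in> Delta_rep N. \<forall>a b. a \<in> U N - dom c \<and> b \<in> U N - dom c \<and> a \<noteq> b \<longrightarrow>
                cond_pr M (atom N b pFnG) (atom N a pFG \<inter> conj_event N c)
                  \<le> cond_pr M (atom N b pFnG) (conj_event N c)"
  shows "\<forall>a \<in> U N. \<forall>c \<in> delta_rep N.
           \<not> determines N (conj_event N c) (atom N a pFG) \<and> \<not> determines N (conj_event N c) (Hyp N) \<longrightarrow>
           cond_pr M (Hyp N) (atom N a pFG \<inter> conj_event N c) > cond_pr M (Hyp N) (conj_event N c)"
proof -
  interpret prob_space M by (rule prob)
  have pos: "measure M E > 0" if "E \<subseteq> Omega N" "E \<noteq> {}" for E
  proof (cases "E = Omega N")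
    case True
    then show ?thesis using prob_space space by simp
  next
    case False
    then show ?thesis using cournot that by blast
  qed
  have add: "measure M X = measure M (X \<inter> Y) + measure M (X - Y)" if "X \<subseteq> Omega N" for X Y
  proof -
    have "X = (X \<inter> Y) \<union> (X - Y)" by blast
    then have "measure M X = measure M ((X \<inter> Y) \<union> (X - Y))" by simp
    also have "\<dots> = measure M (X \<inter> Y) + measure M (X - Y)"
      by (rule finite_measure_Union) (use that sets in auto)
    finally show ?thesis .
  qed
  have upd: "w(x:=v) \<in> conj_event N c" if "w \<in> conj_event N c" "x \<in> U N" "x \<notin> dom c" for w x v c
    using that by (auto simp: conj_event_def Omega_def)
  have CO: "conj_event N c \<subseteq> Omega N" for c by (auto simp: conj_event_def)
  have AO: "atom N b P \<subseteq> Omega N" for b P by (auto simp: atom_def)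
  define T where "T S = {w \<in> Omega N. \<forall>b\<in>S. w b \<in> pFimpG}" for S
  have key: "measure M (atom N a pFG \<inter> conj_event N c \<inter> T S) / measure M (atom N a pFG \<inter> conj_event N c)
      \<ge> measure M (conj_event N c \<inter> T S) / measure M (conj_event N c)"
    if "finite S" "c \<in> Delta_rep N" "a \<notin> dom c" "S \<inter> dom c = {}" "a \<notin> S" "S \<subseteq> U N" "a \<in> U N"
    for S a c
    using that
  proof (induction S arbitrary: c rule: finite_induct)
    case empty
    obtain w where w: "w \<in> conj_event N c" using empty(1) by (auto simp: Delta_rep_def)
    have "w(a:=(True,True)) \<in> atom N a pFG \<inter> conj_event N c"
      using upd[OF w] empty by (auto simp: atom_def pFG_def conj_event_def)
    then have p1: "measure M (atom N a pFG \<inter> conj_event N c) > 0"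
      using pos[of "atom N a pFG \<inter> conj_event N c"] AO by blast
    have e1: "atom N a pFG \<inter> conj_event N c \<inter> T {} = atom N a pFG \<inter> conj_event N c"
      and e2: "conj_event N c \<inter> T {} = conj_event N c"
      using CO by (auto simp: T_def)
    have "measure M (conj_event N c) / measure M (conj_event N c) \<le> 1"
      by (simp add: divide_le_eq_1)
    then show ?case using p1 e1 e2 by simp
  next
    case (insert b S)
    define c' where "c' = c(b \<mapsto> pFimpG)"
    have bdom: "b \<notin> dom c" "b \<in> U N" "b \<noteq> a" using insert by auto
    have C': "conj_event N c' = conj_event N c \<inter> atom N b pFimpG"
      using bdom(1) by (auto simp: c'_def conj_event_def atom_def split: if_splits)
    obtain w where w: "w \<in> conj_event N c" using insert by (auto simp: Delta_rep_def)
    have wb: "w(b:=(True,True)) \<in> conj_event N c" by (rule upd[OF w]) (use bdom in auto)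
    have wab: "(w(b:=(True,True)))(a:=(True,True)) \<in> conj_event N c"
      by (rule upd[OF wb]) (use insert in auto)
    have w2: "(w(b:=(True,True)))(a:=(True,True)) \<in> atom N a pFG \<inter> conj_event N c'"
      using wab CO[of c] bdom unfolding C' by (auto simp: atom_def pFG_def pFimpG_def)
    have w1: "w(b:=(True,True)) \<in> conj_event N c'"
      using wb CO[of c] unfolding C' by (auto simp: atom_def pFimpG_def)
    have c'D: "c' \<in> Delta_rep N"
      using insert(4) bdom w1
      by (auto simp: Delta_rep_def c'_def Delta_preds_def ran_map_upd domIff)
    have IH: "measure M (atom N a pFG \<inter> conj_event N c' \<inter> T S) / measure M (atom N a pFG \<inter> conj_event N c')
      \<ge> measure M (conj_event N c' \<inter> T S) / measure M (conj_event N c')"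
    proof (rule insert.IH[OF c'D])
      show "a \<notin> dom c'" using insert.prems bdom by (auto simp: c'_def)
      show "S \<inter> dom c' = {}" using insert.prems insert.hyps bdom by (auto simp: c'_def)
    qed (use insert.prems in auto)
    have h: "cond_pr M (atom N b pFnG) (atom N a pFG \<inter> conj_event N c)
                  \<le> cond_pr M (atom N b pFnG) (conj_event N c)"
      using hyp insert bdom by auto
    define p where "p = measure M (atom N a pFG \<inter> conj_event N c)"
    define p' where "p' = measure M (atom N a pFG \<inter> conj_event N c')"
    define q where "q = measure M (conj_event N c)"
    define q' where "q' = measure M (conj_event N c')"
    define A where "A = measure M (atom N a pFG \<inter> conj_event N c' \<inter> T S)"
    define B where "B = measure M (conj_event N c' \<inter> T S)"
    have p'pos: "p' > 0" unfolding p'_def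
      by (rule pos) (use w2 AO in auto)
    have q'pos: "q' > 0" unfolding q'_def
      by (rule pos) (use w1 CO in auto)
    have ppos: "p > 0" unfolding p_def
      by (rule pos) (use w2 AO C' in auto)
    have qpos: "q > 0" unfolding q_def
      by (rule pos) (use w1 CO C' in auto)
    have s1: "atom N a pFG \<inter> conj_event N c - atom N b pFnG = atom N a pFG \<inter> conj_event N c'"
      by (auto simp: C' atom_def pFnG_def pFimpG_def)
    have s2: "conj_event N c - atom N b pFnG = conj_event N c'"
      using CO by (auto simp: C' atom_def pFnG_def pFimpG_def)
    have pp: "p = measure M (atom N b pFnG \<inter> (atom N a pFG \<inter> conj_event N c)) + p'"
      unfolding p_def p'_def using add[of "atom N a pFG \<inter> conj_event N c" "atom N b pFnG"] AO s1
      by (auto simp: Int_commute)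
    have qq: "q = measure M (atom N b pFnG \<inter> conj_event N c) + q'"
      unfolding q_def q'_def using add[of "conj_event N c" "atom N b pFnG"] CO s2
      by (auto simp: Int_commute)
    have h2: "p' / p \<ge> q' / q"
    proof -
      have "p'/p = 1 - measure M (atom N b pFnG \<inter> (atom N a pFG \<inter> conj_event N c)) / p"
        using pp ppos by (simp add: field_simps)
      moreover have "q'/q = 1 - measure M (atom N b pFnG \<inter> conj_event N c) / q"
        using qq qpos by (simp add: field_simps)
      ultimately show ?thesis using h unfolding cond_pr_def p_def q_def by simp
    qed
    have e1: "atom N a pFG \<inter> conj_event N c \<inter> T (insert b S) = atom N a pFG \<inter> conj_event N c' \<inter> T S"
      and e2: "conj_event N c \<inter> T (insert b S) = conj_event N c' \<inter> T S"
      by (auto simp: T_def C' atom_def)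
    have "B / q = (B / q') * (q' / q)" using q'pos by simp
    also have "\<dots> \<le> (A / p') * (p' / p)"
      apply (rule mult_mono)
      using IH h2 p'pos ppos q'pos qpos unfolding A_def B_def p'_def q'_def p_def q_def
      by auto
    also have "\<dots> = A / p" using p'pos by simp
    finally show ?case using e1 e2 unfolding A_def B_def p_def q_def by simp
  qed
  show ?thesis
  proof (intro ballI impI)
    fix a c assume aU: "a \<in> U N" and cd: "c \<in> delta_rep N"
      and nd: "\<not> determines N (conj_event N c) (atom N a pFG) \<and> \<not> determines N (conj_event N c) (Hyp N)"
    let ?D = "conj_event N c"
    have ran: "ran c \<subseteq> delta_preds" and domU: "dom c \<subseteq> U N" using cd by (auto simp: delta_rep_def)
    obtain w0 where w0: "w0 \<in> ?D" using cd by (auto simp: delta_rep_def)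
    have adom: "a \<notin> dom c"
    proof
      assume "a \<in> dom c"
      then obtain p where p: "c a = Some p" by auto
      then have "p \<in> delta_preds" using ran by (auto simp: ran_def)
      moreover have wa: "\<forall>w\<in>?D. w a \<in> p" using p by (force simp: conj_event_def)
      ultimately have "?D \<subseteq> atom N a pFG \<or> ?D \<subseteq> Omega N - atom N a pFG"
        unfolding delta_preds_def
      proof (elim insertE emptyE)
        assume "p = pnFnG" then show ?thesis using wa CO[of c]
          by (auto simp: atom_def pnFnG_def pFG_def)
      next
        assume "p = pnFG" then show ?thesis using wa CO[of c]
          by (auto simp: atom_def pnFG_def pFG_def)
      next
        assume "p = pFG" then show ?thesis using wa CO[of c]
          by (auto simp: atom_def pFG_def)
      qed
      then show False using nd by (auto simp: determines_def)
    qed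
    have dD: "delta_preds \<subseteq> Delta_preds" unfolding delta_preds_def Delta_preds_def by blast
    have cD: "c \<in> Delta_rep N" using cd dD
      unfolding delta_rep_def Delta_rep_def by blast
    define S where "S = U N - dom c - {a}"
    have finS: "finite S" by (simp add: S_def U_def)
    have K: "measure M (atom N a pFG \<inter> ?D \<inter> T S) / measure M (atom N a pFG \<inter> ?D)
      \<ge> measure M (?D \<inter> T S) / measure M ?D"
      by (rule key[OF finS cD adom]) (use aU in \<open>auto simp: S_def\<close>)
    have inFimp: "w b \<in> pFimpG" if wD: "w \<in> ?D" and bd: "b \<in> dom c" for w b
    proof -
      obtain p where p: "c b = Some p" using bd by blast
      then have "p \<in> delta_preds" using ran by (auto simp: ran_def)
      moreover have "w b \<in> p" using wD p bd by (force simp: conj_event_def)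
      ultimately show ?thesis
        by (auto simp: delta_preds_def conj_event_def pnFnG_def pnFG_def pFG_def pFimpG_def)
    qed
    have E1: "Hyp N \<inter> (atom N a pFG \<inter> ?D) = atom N a pFG \<inter> ?D \<inter> T S"
    proof
      show "Hyp N \<inter> (atom N a pFG \<inter> ?D) \<subseteq> atom N a pFG \<inter> ?D \<inter> T S"
        by (auto simp: Hyp_def T_def S_def pFimpG_def)
      show "atom N a pFG \<inter> ?D \<inter> T S \<subseteq> Hyp N \<inter> (atom N a pFG \<inter> ?D)"
      proof
        fix w assume w: "w \<in> atom N a pFG \<inter> ?D \<inter> T S"
        have "\<forall>b\<in>U N. fst (w b) \<longrightarrow> snd (w b)"
        proof (intro ballI impI)
          fix b assume b: "b \<in> U N" "fst (w b)"
          show "snd (w b)"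
          proof (cases "b \<in> dom c")
            case True then show ?thesis using inFimp[of w b] w b by (auto simp: pFimpG_def)
          next
            case False then show ?thesis using w b
              by (cases "b = a") (auto simp: atom_def pFG_def T_def S_def pFimpG_def)
          qed
        qed
        then show "w \<in> Hyp N \<inter> (atom N a pFG \<inter> ?D)" using w by (auto simp: Hyp_def atom_def)
      qed
    qed
    have E2: "Hyp N \<inter> ?D = ?D \<inter> T S \<inter> atom N a pFimpG"
    proof
      show "Hyp N \<inter> ?D \<subseteq> ?D \<inter> T S \<inter> atom N a pFimpG"
        using aU by (auto simp: Hyp_def T_def S_def pFimpG_def atom_def)
      show "?D \<inter> T S \<inter> atom N a pFimpG \<subseteq> Hyp N \<inter> ?D"
      proof
        fix w assume w: "w \<in> ?D \<inter> T S \<inter> atom N a pFimpG"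
        have "\<forall>b\<in>U N. fst (w b) \<longrightarrow> snd (w b)"
        proof (intro ballI impI)
          fix b assume b: "b \<in> U N" "fst (w b)"
          show "snd (w b)"
          proof (cases "b \<in> dom c")
            case True then show ?thesis using inFimp[of w b] w b by (auto simp: pFimpG_def)
          next
            case False then show ?thesis using w b
              by (cases "b = a") (auto simp: atom_def T_def S_def pFimpG_def)
          qed
        qed
        then show "w \<in> Hyp N \<inter> ?D" using w by (auto simp: Hyp_def atom_def)
      qed
    qed
    define w' where "w' = (\<lambda>b. if b \<in> S then (True,True) else if b = a then (True,False) else w0 b)"
    have w'D: "w' \<in> ?D \<inter> T S - atom N a pFimpG"
      using w0 aU adom unfolding w'_def
      by (auto simp: conj_event_def Omega_def S_def T_def pFimpG_def atom_def)
    have Dpos: "measure M ?D > 0" using pos[OF CO] w0 by blast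
    have strict: "measure M (?D \<inter> T S \<inter> atom N a pFimpG) < measure M (?D \<inter> T S)"
    proof -
      have "measure M (?D \<inter> T S - atom N a pFimpG) > 0"
        by (rule pos) (use w'D CO in auto)
      moreover have "?D \<inter> T S \<subseteq> Omega N" using CO[of c] by blast
      ultimately show ?thesis using add[of "?D \<inter> T S" "atom N a pFimpG"] by linarith
    qed
    have "cond_pr M (Hyp N) ?D < measure M (?D \<inter> T S) / measure M ?D"
      unfolding cond_pr_def E2 using strict Dpos by (simp add: divide_strict_right_mono)
    also have "\<dots> \<le> cond_pr M (Hyp N) (atom N a pFG \<inter> ?D)"
      unfolding cond_pr_def E1 using K .
    finally show "cond_pr M (Hyp N) (atom N a pFG \<inter> ?D) > cond_pr M (Hyp N) ?D" .
  qed
qed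

end
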